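(* In the setting below, assume consistency, positivity and no unmeasured confounders. Fix $a\in\{0,1\}$ and, for $j=1,\ldots,p$, let the causal estimand $\theta_{aj}$ be the solution of $M_j(\theta):=\mathbb E[F_j(Y_j(a),\theta)]=0$, where each $M_j$ is differentiable and there are constants $c,\delta>0$ with $\min_{1\le j\le p}\inf_{\theta\in\mathcal B(\theta_{aj},\delta)}|M_j'(\theta)|\ge c$. Suppose $F_j(\tilde Y_j(a),\theta)$ is asymptotically unbiased for $F_j(Y_j(a),\theta)$, i.e., with $\Delta_{mj}(a,\theta)=\mathbb E[F_j(\tilde Y_j(a),\theta)\mid\mathbf S(a),\mathbf W]-F_j(Y_j(a),\theta)$, one has $\delta_m:=\max_{j\in[p]}\sup_{\theta\in\mathcal B(\theta_{aj},\delta)}|\mathbb E[\Delta_{mj}(a,\theta)]|=o(1)$ as $m\to\infty$. Let $\tilde\theta_{aj}\in\mathcal B(\theta_{aj},\delta)$ be a solution of $\mathbb E[\mathbb E[F_j(\tilde Y_j,\theta)\mid A=a,\mathbf W]]=0$. Then $\theta_{aj}$ is identified by $\tilde\theta_{aj}$ as $m\to\infty$, in the sense that $\tilde\theta_{aj}-\theta_{aj}\to 0$ as $m\to\infty$.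
   Context: Setting. $(A,\mathbf W,\mathbf S(0),\mathbf S(1),\mathbf X(0),\mathbf X(1))$ is drawn from a super-population, $A\in\{0,1\}$ treatment, $\mathbf W\in\mathbb R^q$ covariates, $\mathbf S(a)\in\mathbb R^\ell$ latent potential state, $\mathbf X(a)=[\mathbf X_1(a),\ldots,\mathbf X_m(a)]^\top\in\mathbb R^{m\times d}$ potential responses with rows conditionally i.i.d. given $(\mathbf S(a),\mathbf W)$. Potential outcome $\mathbf Y(a)=\mathbb E[f(\mathbf X_1(a))\mid\mathbf S(a),\mathbf W]\in\mathbb R^p$ for a prespecified $f$; derived outcome $\tilde{\mathbf Y}(a)=g(\mathbf X(a))$ and $\tilde{\mathbf Y}=g(\mathbf X)$ for prespecified $g$. Consistency: $\mathbf X=A\mathbf X(1)+(1-A)\mathbf X(0)$. Positivity: $\mathbb P(A=a\mid\mathbf W)\in(0,1)$. No unmeasured confounders: $A\perp\mathbf X(a)\mid\mathbf W$. $F_j:\mathbb R\times\mathbb R\to\mathbb R$ are given estimating functions; $\mathcal B(x,r)$ is the closed ball of radius $r$ around $x$. *)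

theory Defs
  imports "HOL-Probability.Probability"
begin

definition sigma_gen :: "'o measure \<Rightarrow> ('o \<Rightarrow> 'b::topological_space) \<Rightarrow> 'o measure" where
  "sigma_gen M X = vimage_algebra (space M) X borel"

definition sigma_gen_seq :: "'o measure \<Rightarrow> (nat \<Rightarrow> 'o \<Rightarrow> 'b::topological_space) \<Rightarrow> 'o measure" where
  "sigma_gen_seq M X = sigma (space M) (\<Union>i. {X i -` B \<inter> space M | B. B \<in> sets borel})"

definition cprob :: "'o measure \<Rightarrow> 'o measure \<Rightarrow> 'o set \<Rightarrow> 'o \<Rightarrow> real" where
  "cprob M G E = real_cond_exp M G (indicator E)"

definition cond_indep :: "'o measure \<Rightarrow> 'o measure \<Rightarrow> 'o measure \<Rightarrow> 'o measure \<Rightarrow> bool" where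
  "cond_indep M F1 F2 G \<longleftrightarrow>
     (\<forall>E\<in>sets F1. \<forall>B\<in>sets F2. AE \<omega> in M.
        cprob M G (E \<inter> B) \<omega> = cprob M G E \<omega> * cprob M G B \<omega>)"

definition cond_iid_seq :: "'o measure \<Rightarrow> (nat \<Rightarrow> 'o \<Rightarrow> 'd::topological_space) \<Rightarrow> 'o measure \<Rightarrow> bool" where
  "cond_iid_seq M X G \<longleftrightarrow>
     (\<forall>I B. finite I \<longrightarrow> (\<forall>i\<in>I. B i \<in> sets borel) \<longrightarrow>
        (AE \<omega> in M. cprob M G (\<Inter>i\<in>I. X i -` B i \<inter> space M) \<omega>
                     = (\<Prod>i\<in>I. cprob M G (X 0 -` B i \<inter> space M) \<omega>)))"

text \<open>E[Z | E, W] as a random variable: E[Z 1_E | W] / P(E | W).\<close>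
definition cexp_event_W :: "'o measure \<Rightarrow> 'o set \<Rightarrow> ('o \<Rightarrow> 'w::topological_space) \<Rightarrow> ('o \<Rightarrow> real) \<Rightarrow> 'o \<Rightarrow> real" where
  "cexp_event_W M E W Z \<omega> =
     real_cond_exp M (sigma_gen M W) (\<lambda>x. Z x * indicator E x) \<omega> / cprob M (sigma_gen M W) E \<omega>"

text \<open>Potential outcome Y_j(b) = E[f_j(X_1(b)) | S(b), W] (row 1 is index 0).\<close>
definition Ypot :: "'o measure \<Rightarrow> (nat \<Rightarrow> 'o \<Rightarrow> 'l::topological_space) \<Rightarrow> ('o \<Rightarrow> 'w::topological_space)
    \<Rightarrow> (nat \<Rightarrow> nat \<Rightarrow> 'o \<Rightarrow> 'd) \<Rightarrow> ('d \<Rightarrow> 'p \<Rightarrow> real) \<Rightarrow> nat \<Rightarrow> 'p \<Rightarrow> 'o \<Rightarrow> real" where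
  "Ypot M S W Xpot f b j = real_cond_exp M (sigma_gen M (\<lambda>\<omega>. (S b \<omega>, W \<omega>))) (\<lambda>\<omega>. f (Xpot b 0 \<omega>) j)"

end

theory Submission
  imports Defs
begin

lemma sub_gen:
  assumes "prob_space M" "X \<in> borel_measurable M"
  shows "finite_measure_subalgebra M (sigma_gen M X)"
proof -
  interpret prob_space M by fact
  have "subalgebra M (sigma_gen M X)"
    unfolding subalgebra_def sigma_gen_def
    using assms(2) by (auto simp add: sets_vimage_algebra intro!: sets.sigma_sets_subset measurable_sets[OF assms(2)])
  then show ?thesis by unfold_locales
qed

lemma meas_gen: "X \<in> space M \<rightarrow> space N \<Longrightarrow> X \<in> measurable (sigma_gen M X) borel"
  unfolding sigma_gen_def by (rule measurable_vimage_algebra1) auto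

lemma sub_seq:
  assumes "prob_space M" "\<forall>i. X i \<in> borel_measurable M"
  shows "finite_measure_subalgebra M (sigma_gen_seq M X)"
proof -
  interpret prob_space M by fact
  have g: "(\<Union>i. {X i -` B \<inter> space M | B. B \<in> sets borel}) \<subseteq> Pow (space M)" by auto
  have "subalgebra M (sigma_gen_seq M X)"
    unfolding subalgebra_def sigma_gen_seq_def
    using assms(2) g by (auto intro!: sets.sigma_sets_subset measurable_sets)
  then show ?thesis by unfold_locales
qed

lemma meas_seq:
  shows "X i \<in> borel_measurable (sigma_gen_seq M X)"
proof -
  have g: "(\<Union>i. {X i -` B \<inter> space M | B. B \<in> sets borel}) \<subseteq> Pow (space M)" by auto
  show ?thesis
    unfolding sigma_gen_seq_def
    apply (rule measurableI)
    using g by (auto simp: space_measure_of_conv)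
qed
lemma key:
  assumes P: "prob_space M" and sG: "finite_measure_subalgebra M G" and sH: "finite_measure_subalgebra M H"
    and E: "E \<in> sets M"
    and ci: "\<forall>B\<in>sets H. AE \<omega> in M. cprob M G (E \<inter> B) \<omega> = cprob M G E \<omega> * cprob M G B \<omega>"
    and Zm[measurable]: "Z \<in> borel_measurable H" and Zi: "integrable M Z"
  shows "AE \<omega> in M. real_cond_exp M G (\<lambda>x. Z x * indicator E x) \<omega> = cprob M G E \<omega> * real_cond_exp M G Z \<omega>"
proof -
  interpret prob_space M by fact
  interpret G: finite_measure_subalgebra M G by fact
  interpret H: finite_measure_subalgebra M H by fact
  define p where "p = cprob M G E"
  have [measurable]: "E \<in> sets M" by fact
  have pG[measurable]: "p \<in> borel_measurable G" unfolding p_def cprob_def by simp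
  have pM[measurable]: "p \<in> borel_measurable M" unfolding p_def cprob_def by simp
  have ZM[measurable]: "Z \<in> borel_measurable M" using Zi by auto
  have iE: "integrable M (indicator E :: _ \<Rightarrow> real)" by (rule integrable_real_indicator) (auto simp: E emeasure_eq_measure)
  have pi: "integrable M p" unfolding p_def cprob_def using G.real_cond_exp_int(1)[OF iE] .
  have p0: "AE x in M. p x \<ge> 0" unfolding p_def cprob_def
    by (rule G.real_cond_exp_pos) auto
  have p1: "AE x in M. p x \<le> 1" unfolding p_def cprob_def
    by (rule G.real_cond_exp_le_c[OF iE]) (auto simp: indicator_def)
  have pb: "AE x in M. \<bar>p x\<bar> \<le> 1" using p0 p1 by auto
  have bnd: "integrable M (\<lambda>x. q x * p x * Z x)" if [measurable]: "q \<in> borel_measurable M" and q: "\<And>x. \<bar>q x\<bar> \<le> 1" for q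
  proof (rule Bochner_Integration.integrable_bound[OF Zi])
    show "AE x in M. norm (q x * p x * Z x) \<le> norm (Z x)"
      using pb proof eventually_elim
      case (elim x)
      have "\<bar>q x * p x\<bar> \<le> 1" using q[of x] elim by (simp add: abs_mult mult_le_one)
      then show ?case by (simp add: abs_mult mult_left_le_one_le mult_le_cancel_right1)
    qed
  qed simp
  have stepa: "(\<integral>x. indicator C x * (Z x * indicator E x) \<partial>M) = (\<integral>x. indicator C x * (p x * Z x) \<partial>M)"
    if C: "C \<in> sets G" for C
  proof -
    have [measurable]: "C \<in> sets G" by fact
    have CM[measurable]: "C \<in> sets M" using C G.subalg by (auto simp: subalgebra_def)
    have iC[simp]: "integrable M (indicator C :: _ \<Rightarrow> real)" by (rule integrable_real_indicator) (auto simp: emeasure_eq_measure)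
    define k where "k = (\<lambda>x. indicator C x * indicator E x - indicator C x * p x :: real)"
    have [measurable]: "k \<in> borel_measurable M" unfolding k_def by measurable
    have ki: "integrable M k" unfolding k_def
      using integrable_mult_indicator[OF CM pi] by (auto intro!: Bochner_Integration.integrable_diff integrable_real_mult_indicator simp: mult.assoc)
    have rk: "AE x in M. real_cond_exp M H k x = 0"
    proof (rule H.real_cond_exp_charact)
      fix B assume B[measurable]: "B \<in> sets H"
      have BM[measurable]: "B \<in> sets M" using B H.subalg by (auto simp: subalgebra_def)
      have "(\<integral>x. indicator C x * indicator (E \<inter> B) x \<partial>M) = (\<integral>x. indicator C x * real_cond_exp M G (indicator (E \<inter> B)) x \<partial>M)"
        by (rule G.real_cond_exp_intg(2)[symmetric]) (auto intro!: integrable_real_mult_indicator)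
      also have "\<dots> = (\<integral>x. (indicator C x * p x) * real_cond_exp M G (indicator B) x \<partial>M)"
        apply (rule integral_cong_AE)
        using ci B by (auto simp: p_def cprob_def elim!: AE_mp)
      also have "\<dots> = (\<integral>x. (indicator C x * p x) * indicator B x \<partial>M)"
        by (rule G.real_cond_exp_intg(2)) (use integrable_mult_indicator[OF BM integrable_mult_indicator[OF CM pi]] in \<open>auto simp: mult_ac\<close>)
      finally have eq: "(\<integral>x. indicator C x * indicator (E \<inter> B) x \<partial>M) = (\<integral>x. (indicator C x * p x) * indicator B x \<partial>M)" .
      have "(\<integral>x\<in>B. k x \<partial>M) = (\<integral>x. indicator C x * indicator (E \<inter> B) x - (indicator C x * p x) * indicator B x \<partial>M)"
        unfolding set_lebesgue_integral_def k_def by (rule Bochner_Integration.integral_cong) (auto simp: indicator_def)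
      also have "\<dots> = 0"
      proof -
        have i1: "integrable M (\<lambda>x. indicator C x * indicator (E \<inter> B) x :: real)"
          by (auto intro!: integrable_real_mult_indicator simp: emeasure_eq_measure)
        have i2: "integrable M (\<lambda>x. (indicator C x * p x) * indicator B x)"
          using integrable_mult_indicator[OF BM integrable_mult_indicator[OF CM pi]] by (simp add: mult_ac)
        show ?thesis using eq by (subst Bochner_Integration.integral_diff[OF i1 i2]) simp
      qed
      finally show "(\<integral>x\<in>B. k x \<partial>M) = (\<integral>x\<in>B. 0 \<partial>M)" by simp
    qed (auto simp: ki)
    have Zki: "integrable M (\<lambda>x. Z x * k x)"
      using bnd[of "indicator C"] integrable_mult_indicator[OF _ integrable_mult_indicator[OF _ Zi], of E C]
      unfolding k_def by (auto simp: algebra_simps intro!: Bochner_Integration.integrable_diff)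
    have "(\<integral>x. Z x * k x \<partial>M) = (\<integral>x. Z x * real_cond_exp M H k x \<partial>M)"
      by (rule H.real_cond_exp_intg(2)[symmetric]) (auto simp: Zki)
    also have "\<dots> = 0" using rk by (subst integral_cong_AE[where g="\<lambda>x. 0"]) (auto elim!: AE_mp)
    finally have "(\<integral>x. Z x * k x \<partial>M) = 0" .
    then show ?thesis
      using bnd[of "indicator C"] integrable_mult_indicator[OF _ integrable_mult_indicator[OF _ Zi], of E C]
      unfolding k_def
      by (subst (asm) Bochner_Integration.integral_cong[where g="\<lambda>x. indicator C x * (Z x * indicator E x) - indicator C x * (p x * Z x)"])
         (auto simp: algebra_simps)
  qed
  show ?thesis unfolding p_def[symmetric]
  proof (rule G.real_cond_exp_charact)
    fix C assume C[measurable]: "C \<in> sets G"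
    have CM[measurable]: "C \<in> sets M" using C G.subalg by (auto simp: subalgebra_def)
    have "(\<integral>x. indicator C x * (p x * real_cond_exp M G Z x) \<partial>M) = (\<integral>x. (indicator C x * p x) * real_cond_exp M G Z x \<partial>M)"
      by (simp add: mult_ac)
    also have "\<dots> = (\<integral>x. (indicator C x * p x) * Z x \<partial>M)"
      by (rule G.real_cond_exp_intg(2)) (use bnd[of "indicator C"] in \<open>auto simp: indicator_def\<close>)
    finally show "(\<integral>x\<in>C. Z x * indicator E x \<partial>M) = (\<integral>x\<in>C. p x * real_cond_exp M G Z x \<partial>M)"
      unfolding set_lebesgue_integral_def using stepa[OF C] by (simp add: mult_ac)
  next
    show "integrable M (\<lambda>x. Z x * indicator E x)"
      using integrable_mult_indicator[OF E Zi] by (simp add: mult.commute)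
  next
    have ri: "integrable M (real_cond_exp M G Z)" using G.real_cond_exp_int(1)[OF Zi] .
    show "integrable M (\<lambda>x. p x * real_cond_exp M G Z x)"
    proof (rule Bochner_Integration.integrable_bound[OF ri])
      show "AE x in M. norm (p x * real_cond_exp M G Z x) \<le> norm (real_cond_exp M G Z x)"
        using pb by eventually_elim (simp add: abs_mult mult_left_le_one_le mult_le_cancel_right1)
    qed simp
  qed simp
qed
lemma mvt_bound:
  fixes h :: "real \<Rightarrow> real"
  assumes d: "\<forall>t. h differentiable (at t)" and b: "\<forall>t\<in>cball x0 r. c \<le> \<bar>deriv h t\<bar>"
    and y: "y \<in> cball x0 r" and c: "c > 0"
  shows "\<bar>y - x0\<bar> \<le> \<bar>h y - h x0\<bar> / c"
proof -
  have D: "\<And>t. DERIV h t :> deriv h t" using d DERIV_deriv_iff_real_differentiable by blast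
  have "c * \<bar>y - x0\<bar> \<le> \<bar>h y - h x0\<bar>"
  proof (cases y x0 rule: linorder_cases)
    case less
    obtain z where z: "y < z" "z < x0" "h x0 - h y = (x0 - y) * deriv h z" using MVT2[OF less D] by blast
    have "z \<in> cball x0 r" using y z by (auto simp: dist_real_def)
    then have "c \<le> \<bar>deriv h z\<bar>" using b by auto
    then show ?thesis using z less by (simp add: abs_mult abs_minus_commute mult.commute mult_right_mono)
  next
    case greater
    obtain z where z: "x0 < z" "z < y" "h y - h x0 = (y - x0) * deriv h z" using MVT2[OF greater D] by blast
    have "z \<in> cball x0 r" using y z by (auto simp: dist_real_def)
    then have "c \<le> \<bar>deriv h z\<bar>" using b by auto
    then show ?thesis using z greater by (simp add: abs_mult mult.commute mult_right_mono)
  qed simp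
  then show ?thesis using c by (simp add: pos_le_divide_eq mult.commute)
qed
theorem lemma4:
  fixes M :: "'o measure"
    and A :: "'o \<Rightarrow> nat"
    and W :: "'o \<Rightarrow> 'w::euclidean_space"
    and S :: "nat \<Rightarrow> 'o \<Rightarrow> 'l::euclidean_space"
    and Xpot :: "nat \<Rightarrow> nat \<Rightarrow> 'o \<Rightarrow> 'd::euclidean_space"
    and X :: "nat \<Rightarrow> 'o \<Rightarrow> 'd"
    and f :: "'d \<Rightarrow> 'p::finite \<Rightarrow> real"
    and g :: "nat \<Rightarrow> (nat \<Rightarrow> 'd) \<Rightarrow> 'p \<Rightarrow> real"
    and F :: "'p \<Rightarrow> real \<Rightarrow> real \<Rightarrow> real"
    and a :: nat
    and \<theta>a :: "'p \<Rightarrow> real"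
    and \<theta>t :: "nat \<Rightarrow> 'p \<Rightarrow> real"
    and c \<delta> :: real
  assumes P: "prob_space M"
    and A_meas: "A \<in> measurable M (count_space UNIV)"
    and A_bin: "\<forall>\<omega>\<in>space M. A \<omega> \<in> {0, 1}"
    and W_meas: "W \<in> borel_measurable M"
    and S_meas: "\<forall>b. S b \<in> borel_measurable M"
    and Xpot_meas: "\<forall>b i. Xpot b i \<in> borel_measurable M"
    and rows_iid: "\<forall>b\<in>{0,1}. cond_iid_seq M (Xpot b) (sigma_gen M (\<lambda>\<omega>. (S b \<omega>, W \<omega>)))"
    and consistency: "\<forall>i. \<forall>\<omega>\<in>space M.
          X i \<omega> = real (A \<omega>) *\<^sub>R Xpot 1 i \<omega> + (1 - real (A \<omega>)) *\<^sub>R Xpot 0 i \<omega>"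
    and positivity: "\<forall>b\<in>{0,1}. AE \<omega> in M.
          0 < cprob M (sigma_gen M W) {x \<in> space M. A x = b} \<omega> \<and>
          cprob M (sigma_gen M W) {x \<in> space M. A x = b} \<omega> < 1"
    and no_unmeasured_confounders:
          "\<forall>b\<in>{0,1}. cond_indep M (sigma_gen M A) (sigma_gen_seq M (Xpot b)) (sigma_gen M W)"
    and f_meas: "\<forall>j. (\<lambda>x. f x j) \<in> borel_measurable borel"
    and f_int: "\<forall>b j. integrable M (\<lambda>\<omega>. f (Xpot b 0 \<omega>) j)"
    and g_local: "\<forall>m x y. (\<forall>i<m. x i = y i) \<longrightarrow> g m x = g m y"
    and g_meas: "\<forall>m j. (\<lambda>x. g m x j) \<in> borel_measurable (Pi\<^sub>M UNIV (\<lambda>_. borel))"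
    and F_meas: "\<forall>j \<theta>. (\<lambda>y. F j y \<theta>) \<in> borel_measurable borel"
    and F_int_Y: "\<forall>j \<theta>. integrable M (\<lambda>\<omega>. F j (Ypot M S W Xpot f a j \<omega>) \<theta>)"
    and F_int_Ytil: "\<forall>m j \<theta>. integrable M (\<lambda>\<omega>. F j (g m (\<lambda>i. Xpot a i \<omega>) j) \<theta>)"
    and a01: "a \<in> {0, 1}"
    and estimand: "\<forall>j. (\<integral>\<omega>. F j (Ypot M S W Xpot f a j \<omega>) (\<theta>a j) \<partial>M) = 0 \<and>
          (\<forall>\<theta>. (\<integral>\<omega>. F j (Ypot M S W Xpot f a j \<omega>) \<theta> \<partial>M) = 0 \<longrightarrow> \<theta> = \<theta>a j)"
    and M_diff: "\<forall>j \<theta>. (\<lambda>t. \<integral>\<omega>. F j (Ypot M S W Xpot f a j \<omega>) t \<partial>M) differentiable (at \<theta>)"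
    and c_pos: "c > 0" and \<delta>_pos: "\<delta> > 0"
    and deriv_bound: "\<forall>j. \<forall>\<theta>\<in>cball (\<theta>a j) \<delta>.
          \<bar>deriv (\<lambda>t. \<integral>\<omega>. F j (Ypot M S W Xpot f a j \<omega>) t \<partial>M) \<theta>\<bar> \<ge> c"
    and asymp_unbiased:
          "(\<lambda>m. SUP j. SUP \<theta>\<in>cball (\<theta>a j) \<delta>.
              ereal \<bar>\<integral>\<omega>. (real_cond_exp M (sigma_gen M (\<lambda>\<omega>. (S a \<omega>, W \<omega>)))
                               (\<lambda>\<omega>. F j (g m (\<lambda>i. Xpot a i \<omega>) j) \<theta>) \<omega>
                           - F j (Ypot M S W Xpot f a j \<omega>) \<theta>) \<partial>M\<bar>) \<longlonglongrightarrow> 0"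
    and \<theta>t_ball: "\<forall>m j. \<theta>t m j \<in> cball (\<theta>a j) \<delta>"
    and \<theta>t_sol: "\<forall>m j. (\<integral>\<omega>. cexp_event_W M {x \<in> space M. A x = a} W
                         (\<lambda>\<omega>. F j (g m (\<lambda>i. X i \<omega>) j) (\<theta>t m j)) \<omega> \<partial>M) = 0"
  shows "\<forall>j. (\<lambda>m. \<theta>t m j - \<theta>a j) \<longlonglongrightarrow> 0"
proof (intro allI)
  fix j
  interpret prob_space M by (rule P)
  define G where "G = sigma_gen M W"
  define SW where "SW = sigma_gen M (\<lambda>\<omega>. (S a \<omega>, W \<omega>))"
  define H where "H = sigma_gen_seq M (Xpot a)"
  define E where "E = {x \<in> space M. A x = a}"
  define Mj where "Mj = (\<lambda>t. \<integral>\<omega>. F j (Ypot M S W Xpot f a j \<omega>) t \<partial>M)"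
  define Za where "Za = (\<lambda>m t \<omega>. F j (g m (\<lambda>i. Xpot a i \<omega>) j) t)"
  have [measurable]: "W \<in> borel_measurable M" using W_meas .
  have [measurable]: "S a \<in> borel_measurable M" using S_meas by auto
  have [measurable]: "\<And>b i. Xpot b i \<in> borel_measurable M" using Xpot_meas by auto
  have [measurable]: "A \<in> measurable M (count_space UNIV)" using A_meas .
  have sG: "finite_measure_subalgebra M G" unfolding G_def by (rule sub_gen[OF P W_meas])
  have sSW: "finite_measure_subalgebra M SW" unfolding SW_def by (rule sub_gen[OF P]) measurable
  have sH: "finite_measure_subalgebra M H" unfolding H_def by (rule sub_seq[OF P]) (use Xpot_meas in auto)
  interpret G: finite_measure_subalgebra M G by (rule sG)
  interpret SW: finite_measure_subalgebra M SW by (rule sSW)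
  have EM: "E \<in> sets M" unfolding E_def by measurable
  have EA: "E \<in> sets (sigma_gen M A)"
  proof -
    have Am: "A \<in> borel_measurable (sigma_gen M A)" by (rule meas_gen[of A M "count_space UNIV"]) auto
    have "A -` {a} \<inter> space (sigma_gen M A) \<in> sets (sigma_gen M A)"
      by (rule measurable_sets[OF Am]) auto
    moreover have "space (sigma_gen M A) = space M" unfolding sigma_gen_def by simp
    ultimately show ?thesis unfolding E_def by (simp add: vimage_def Int_def conj_commute)
  qed
  have ci: "\<forall>B\<in>sets H. AE \<omega> in M. cprob M G (E \<inter> B) \<omega> = cprob M G E \<omega> * cprob M G B \<omega>"
    using no_unmeasured_confounders a01 EA unfolding cond_indep_def G_def H_def by blast
  have XH: "(\<lambda>\<omega> i. Xpot a i \<omega>) \<in> measurable H (Pi\<^sub>M UNIV (\<lambda>_. borel))"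
    by (rule measurable_PiM_single') (auto simp: H_def meas_seq)
  have ZaH[measurable]: "Za m t \<in> borel_measurable H" for m t
  proof -
    have "(\<lambda>\<omega>. g m (\<lambda>i. Xpot a i \<omega>) j) \<in> borel_measurable H"
      using measurable_compose[OF XH] g_meas by blast
    then show ?thesis unfolding Za_def using measurable_compose F_meas by blast
  qed
  have Zai: "integrable M (Za m t)" for m t unfolding Za_def using F_int_Ytil by blast
  have ident: "(\<integral>\<omega>. cexp_event_W M E W (\<lambda>\<omega>. F j (g m (\<lambda>i. X i \<omega>) j) t) \<omega> \<partial>M) = (\<integral>\<omega>. Za m t \<omega> \<partial>M)" for m t
  proof -
    define Zm where "Zm = (\<lambda>\<omega>. F j (g m (\<lambda>i. X i \<omega>) j) t)"
    have Xm: "X i \<in> borel_measurable M" for i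
    proof -
      have "(\<lambda>\<omega>. real (A \<omega>) *\<^sub>R Xpot 1 i \<omega> + (1 - real (A \<omega>)) *\<^sub>R Xpot 0 i \<omega>) \<in> borel_measurable M"
        by measurable
      then show ?thesis by (rule measurable_cong[THEN iffD1, rotated]) (use consistency in auto)
    qed
    have XM: "(\<lambda>\<omega> i. X i \<omega>) \<in> measurable M (Pi\<^sub>M UNIV (\<lambda>_. borel))"
      by (rule measurable_PiM_single') (auto simp: Xm)
    have ZmM[measurable]: "Zm \<in> borel_measurable M"
    proof -
      have "(\<lambda>\<omega>. g m (\<lambda>i. X i \<omega>) j) \<in> borel_measurable M"
        using measurable_compose[OF XM] g_meas by blast
      then show ?thesis unfolding Zm_def using measurable_compose F_meas by blast
    qed
    have ZaM[measurable]: "Za m t \<in> borel_measurable M" using Zai by auto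
    have [measurable]: "E \<in> sets M" by (rule EM)
    have eqE: "Zm \<omega> * indicator E \<omega> = Za m t \<omega> * indicator E \<omega>" if "\<omega> \<in> space M" for \<omega>
    proof (cases "\<omega> \<in> E")
      case True
      then have Aw: "A \<omega> = a" unfolding E_def by auto
      have "X i \<omega> = Xpot a i \<omega>" for i
        using consistency that Aw a01 by auto
      then show ?thesis unfolding Zm_def Za_def by simp
    qed simp
    have c1: "AE \<omega> in M. real_cond_exp M G (\<lambda>x. Zm x * indicator E x) \<omega> = real_cond_exp M G (\<lambda>x. Za m t x * indicator E x) \<omega>"
      by (rule G.real_cond_exp_cong) (auto simp: eqE)
    have c2: "AE \<omega> in M. real_cond_exp M G (\<lambda>x. Za m t x * indicator E x) \<omega> = cprob M G E \<omega> * real_cond_exp M G (Za m t) \<omega>"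
      by (rule key[OF P sG sH EM ci ZaH Zai])
    have pos: "AE \<omega> in M. 0 < cprob M G E \<omega>"
      using positivity a01 unfolding E_def G_def by auto
    have ae: "AE \<omega> in M. cexp_event_W M E W Zm \<omega> = real_cond_exp M G (Za m t) \<omega>"
      using c1 c2 pos by eventually_elim (simp add: cexp_event_W_def G_def[symmetric])
    have "(\<integral>\<omega>. cexp_event_W M E W Zm \<omega> \<partial>M) = (\<integral>\<omega>. real_cond_exp M G (Za m t) \<omega> \<partial>M)"
      by (rule integral_cong_AE) (use ae in \<open>auto simp: cexp_event_W_def cprob_def\<close>)
    also have "\<dots> = (\<integral>\<omega>. Za m t \<omega> \<partial>M)" by (rule G.real_cond_exp_int(2)[OF Zai])
    finally show ?thesis unfolding Zm_def .
  qed
  have zero: "(\<integral>\<omega>. Za m (\<theta>t m j) \<omega> \<partial>M) = 0" for m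
    using ident[of m "\<theta>t m j"] \<theta>t_sol unfolding E_def by simp
  define D where "D = (\<lambda>m. SUP j. SUP \<theta>\<in>cball (\<theta>a j) \<delta>.
              ereal \<bar>\<integral>\<omega>. (real_cond_exp M (sigma_gen M (\<lambda>\<omega>. (S a \<omega>, W \<omega>)))
                               (\<lambda>\<omega>. F j (g m (\<lambda>i. Xpot a i \<omega>) j) \<theta>) \<omega>
                           - F j (Ypot M S W Xpot f a j \<omega>) \<theta>) \<partial>M\<bar>)"
  have D0: "D \<longlonglongrightarrow> 0" using asymp_unbiased unfolding D_def .
  have bound: "ereal \<bar>Mj (\<theta>t m j)\<bar> \<le> D m" for m
  proof -
    have "(\<integral>\<omega>. (real_cond_exp M SW (Za m (\<theta>t m j)) \<omega> - F j (Ypot M S W Xpot f a j \<omega>) (\<theta>t m j)) \<partial>M)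
        = (\<integral>\<omega>. real_cond_exp M SW (Za m (\<theta>t m j)) \<omega> \<partial>M) - Mj (\<theta>t m j)"
      unfolding Mj_def using SW.real_cond_exp_int(1)[OF Zai] F_int_Y by simp
    also have "\<dots> = - Mj (\<theta>t m j)" using SW.real_cond_exp_int(2)[OF Zai] zero by simp
    finally have eq: "\<bar>\<integral>\<omega>. (real_cond_exp M SW (Za m (\<theta>t m j)) \<omega> - F j (Ypot M S W Xpot f a j \<omega>) (\<theta>t m j)) \<partial>M\<bar> = \<bar>Mj (\<theta>t m j)\<bar>" by simp
    show ?thesis unfolding D_def
      apply (rule SUP_upper2[where i=j], simp)
      apply (rule SUP_upper2[where i="\<theta>t m j"])
      using \<theta>t_ball eq by (auto simp: SW_def Za_def)
  qed
  have "(\<lambda>m. ereal \<bar>Mj (\<theta>t m j)\<bar>) \<longlonglongrightarrow> 0"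
    by (rule tendsto_sandwich[OF _ _ tendsto_const D0]) (auto simp: bound)
  then have M0: "(\<lambda>m. \<bar>Mj (\<theta>t m j)\<bar>) \<longlonglongrightarrow> 0" by (simp add: zero_ereal_def)
  have le: "norm (\<theta>t m j - \<theta>a j) \<le> \<bar>Mj (\<theta>t m j)\<bar> / c" for m
  proof -
    have "\<bar>\<theta>t m j - \<theta>a j\<bar> \<le> \<bar>Mj (\<theta>t m j) - Mj (\<theta>a j)\<bar> / c"
      by (rule mvt_bound) (use M_diff deriv_bound \<theta>t_ball c_pos in \<open>auto simp: Mj_def\<close>)
    then show ?thesis using estimand by (simp add: Mj_def)
  qed
  show "(\<lambda>m. \<theta>t m j - \<theta>a j) \<longlonglongrightarrow> 0"
    by (rule Lim_null_comparison[OF _ tendsto_divide_zero[OF M0, of c]]) (use le in auto)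
qed

end
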